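(* Let $\tau$ be a signature, $\mathcal F$ an ultrafilter on $I$, $\mathcal G$ an ultrafilter on $J$, $\{\mathcal A_{i,j}:i\in I,j\in J\}$ a family of $\tau$-structures, and $\phi\in SO(\tau)$. For $j\in J$ let $(\mathcal A_j,\Upsilon_j)$ be the decomposable-Henkin model formed from $\{\mathcal A_{i,j}:i\in I\}$ by $\mathcal F$, and let $(\mathcal A,\Upsilon)$ be the decomposable-Henkin model formed from $\{\mathcal A_{i,j}:(i,j)\in I\times J\}$ by $\mathcal F\times\mathcal G$. Then $\{j\in J:(\mathcal A_j,\Upsilon_j)\models_\epsilon\phi\}\in\mathcal G$ if and only if $(\mathcal A,\Upsilon)\models_\epsilon\phi$.
   Context: $SO(\tau)$: second-order $\tau$-formulas with relation variables only. For ultrafilters $\mathcal F$ on $I$, $\mathcal G$ on $J$, the product $\mathcal F\times\mathcal G$ on $I\times J$ is given by $X\in\mathcal F\times\mathcal G$ iff $\{j:\{i:(i,j)\in X\}\in\mathcal F\}\in\mathcal G$. Given a family $\{\mathcal B_k:k\in L\}$ of $\tau$-structures and an ultrafilter $\mathcal H$ on $L$, with $\mathcal B=\prod_k\mathcal B_k/\mathcal H$, a relation $R\subseteq B^m$ ($m\geq1$) is decomposable if $R=\prod_k R_k/\mathcal H$ for some $R_k\subseteq B_k^m$; the decomposable-Henkin model formed from the family by $\mathcal H$ is the pair $(\mathcal B,\Upsilon)$ where $\Upsilon$ is the set of all decomposable relations. Henkin semantics $\models_\epsilon$: formulas are evaluated in $(\mathcal B,\Upsilon)$ under assignments sending each $m$-ary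 relation variable to an $m$-ary relation in $\Upsilon$ (and first-order variables to elements of $B$); first-order parts are evaluated in the expansion of $\mathcal B$ by the assigned relations as usual, and second-order quantifiers $\exists R$, $\forall R$ range only over the relations in $\Upsilon$ of the appropriate arity. $(\mathcal B,\Upsilon)\models_\epsilon\phi$ means $\phi$ holds under all assignments. *)

theory Defs
  imports Main
begin

definition is_ultrafilter :: "'i set set \<Rightarrow> bool" where
  "is_ultrafilter U \<longleftrightarrow>
     UNIV \<in> U \<and> {} \<notin> U \<and>
     (\<forall>X Y. X \<in> U \<and> X \<subseteq> Y \<longrightarrow> Y \<in> U) \<and>
     (\<forall>X Y. X \<in> U \<and> Y \<in> U \<longrightarrow> X \<inter> Y \<in> U) \<and>
     (\<forall>X. X \<in> U \<or> - X \<in> U)"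

definition prod_uf :: "'i set set \<Rightarrow> 'j set set \<Rightarrow> ('i \<times> 'j) set set" where
  "prod_uf F G = {X. {j. {i. (i, j) \<in> X} \<in> F} \<in> G}"

text \<open>A signature tau is given by a type of relation symbols 'r with arity function
  rar and a type of function symbols 'f with arity function far (constants = 0-ary).\<close>

record ('r, 'f, 'a) struct =
  sdom :: "'a set"
  srel :: "'r \<Rightarrow> 'a list \<Rightarrow> bool"
  sfn  :: "'f \<Rightarrow> 'a list \<Rightarrow> 'a"

definition is_structure :: "('f \<Rightarrow> nat) \<Rightarrow> ('r, 'f, 'a) struct \<Rightarrow> bool" where
  "is_structure far A \<longleftrightarrow> sdom A \<noteq> {} \<and>
     (\<forall>f xs. length xs = far f \<and> set xs \<subseteq> sdom A \<longrightarrow> sfn A f xs \<in> sdom A)"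

definition ucls :: "'k set set \<Rightarrow> ('k \<Rightarrow> ('r, 'f, 'a) struct) \<Rightarrow> ('k \<Rightarrow> 'a) \<Rightarrow> ('k \<Rightarrow> 'a) set" where
  "ucls H Bs f = {g. (\<forall>k. g k \<in> sdom (Bs k)) \<and> {k. f k = g k} \<in> H}"

definition is_rep :: "'k set set \<Rightarrow> ('k \<Rightarrow> ('r, 'f, 'a) struct) \<Rightarrow> ('k \<Rightarrow> 'a) \<Rightarrow> ('k \<Rightarrow> 'a) set \<Rightarrow> bool" where
  "is_rep H Bs g x \<longleftrightarrow> (\<forall>k. g k \<in> sdom (Bs k)) \<and> x = ucls H Bs g"

definition reps :: "'k set set \<Rightarrow> ('k \<Rightarrow> ('r, 'f, 'a) struct) \<Rightarrow> ('k \<Rightarrow> 'a) list \<Rightarrow> ('k \<Rightarrow> 'a) set list \<Rightarrow> bool" where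
  "reps H Bs fs xs \<longleftrightarrow> length fs = length xs \<and> (\<forall>l < length fs. is_rep H Bs (fs ! l) (xs ! l))"

definition uprod :: "'k set set \<Rightarrow> ('k \<Rightarrow> ('r, 'f, 'a) struct) \<Rightarrow> ('r, 'f, ('k \<Rightarrow> 'a) set) struct" where
  "uprod H Bs =
    \<lparr> sdom = {ucls H Bs f | f. \<forall>k. f k \<in> sdom (Bs k)},
      srel = (\<lambda>r xs. \<exists>fs. reps H Bs fs xs \<and> {k. srel (Bs k) r (map (\<lambda>g. g k) fs)} \<in> H),
      sfn = (\<lambda>f xs. ucls H Bs (\<lambda>k. sfn (Bs k) f (map (\<lambda>x. (SOME g. is_rep H Bs g x) k) xs))) \<rparr>"

definition urel :: "'k set set \<Rightarrow> ('k \<Rightarrow> ('r, 'f, 'a) struct) \<Rightarrow> ('k \<Rightarrow> 'a list set) \<Rightarrow> ('k \<Rightarrow> 'a) set list set" where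
  "urel H Bs Rk = {xs. \<exists>fs. reps H Bs fs xs \<and> {k. map (\<lambda>g. g k) fs \<in> Rk k} \<in> H}"

definition mrels :: "'b set \<Rightarrow> nat \<Rightarrow> 'b list set" where
  "mrels B m = {xs. length xs = m \<and> set xs \<subseteq> B}"

definition decomposable :: "'k set set \<Rightarrow> ('k \<Rightarrow> ('r, 'f, 'a) struct) \<Rightarrow> nat \<Rightarrow> ('k \<Rightarrow> 'a) set list set \<Rightarrow> bool" where
  "decomposable H Bs m R \<longleftrightarrow> R \<subseteq> mrels (sdom (uprod H Bs)) m \<and>
     (\<exists>Rk. (\<forall>k. Rk k \<subseteq> mrels (sdom (Bs k)) m) \<and> R = urel H Bs Rk)"

definition henkin_rels :: "'k set set \<Rightarrow> ('k \<Rightarrow> ('r, 'f, 'a) struct) \<Rightarrow> ('k \<Rightarrow> 'a) set list set set" where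
  "henkin_rels H Bs = {R. \<exists>m \<ge> 1. decomposable H Bs m R}"

datatype 'f trm = Var nat | Fn 'f "'f trm list"

text \<open>Relation variables are pairs (name, arity); RApp X m ts applies the m-ary
  relation variable X to the terms ts.\<close>
datatype ('r, 'f) sof =
    Eq "'f trm" "'f trm"
  | Rel 'r "'f trm list"
  | RApp nat nat "'f trm list"
  | Neg "('r, 'f) sof"
  | Conj "('r, 'f) sof" "('r, 'f) sof"
  | Disj "('r, 'f) sof" "('r, 'f) sof"
  | Impl "('r, 'f) sof" "('r, 'f) sof"
  | Ex nat "('r, 'f) sof"
  | All nat "('r, 'f) sof"
  | ExR nat nat "('r, 'f) sof"
  | AllR nat nat "('r, 'f) sof"

fun wf_trm :: "('f \<Rightarrow> nat) \<Rightarrow> 'f trm \<Rightarrow> bool" where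
  "wf_trm far (Var x) = True"
| "wf_trm far (Fn f ts) = (length ts = far f \<and> (\<forall>t \<in> set ts. wf_trm far t))"

fun wf_so :: "('r \<Rightarrow> nat) \<Rightarrow> ('f \<Rightarrow> nat) \<Rightarrow> ('r, 'f) sof \<Rightarrow> bool" where
  "wf_so rar far (Eq t u) = (wf_trm far t \<and> wf_trm far u)"
| "wf_so rar far (Rel r ts) = (length ts = rar r \<and> (\<forall>t \<in> set ts. wf_trm far t))"
| "wf_so rar far (RApp X m ts) = (m \<ge> 1 \<and> length ts = m \<and> (\<forall>t \<in> set ts. wf_trm far t))"
| "wf_so rar far (Neg p) = wf_so rar far p"
| "wf_so rar far (Conj p q) = (wf_so rar far p \<and> wf_so rar far q)"
| "wf_so rar far (Disj p q) = (wf_so rar far p \<and> wf_so rar far q)"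
| "wf_so rar far (Impl p q) = (wf_so rar far p \<and> wf_so rar far q)"
| "wf_so rar far (Ex x p) = wf_so rar far p"
| "wf_so rar far (All x p) = wf_so rar far p"
| "wf_so rar far (ExR X m p) = (m \<ge> 1 \<and> wf_so rar far p)"
| "wf_so rar far (AllR X m p) = (m \<ge> 1 \<and> wf_so rar far p)"

fun tval :: "('r, 'f, 'b) struct \<Rightarrow> (nat \<Rightarrow> 'b) \<Rightarrow> 'f trm \<Rightarrow> 'b" where
  "tval B s (Var x) = s x"
| "tval B s (Fn f ts) = sfn B f (map (tval B s) ts)"

text \<open>Henkin semantics in (B, Ups): s1 assigns first-order variables, s2 X m is the
  relation assigned to the m-ary relation variable X.\<close>
fun hsat :: "('r, 'f, 'b) struct \<Rightarrow> 'b list set set \<Rightarrow> (nat \<Rightarrow> 'b) \<Rightarrow> (nat \<Rightarrow> nat \<Rightarrow> 'b list set)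
    \<Rightarrow> ('r, 'f) sof \<Rightarrow> bool" where
  "hsat B Ups s1 s2 (Eq t u) = (tval B s1 t = tval B s1 u)"
| "hsat B Ups s1 s2 (Rel r ts) = srel B r (map (tval B s1) ts)"
| "hsat B Ups s1 s2 (RApp X m ts) = (map (tval B s1) ts \<in> s2 X m)"
| "hsat B Ups s1 s2 (Neg p) = (\<not> hsat B Ups s1 s2 p)"
| "hsat B Ups s1 s2 (Conj p q) = (hsat B Ups s1 s2 p \<and> hsat B Ups s1 s2 q)"
| "hsat B Ups s1 s2 (Disj p q) = (hsat B Ups s1 s2 p \<or> hsat B Ups s1 s2 q)"
| "hsat B Ups s1 s2 (Impl p q) = (hsat B Ups s1 s2 p \<longrightarrow> hsat B Ups s1 s2 q)"
| "hsat B Ups s1 s2 (Ex x p) = (\<exists>a \<in> sdom B. hsat B Ups (s1(x := a)) s2 p)"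
| "hsat B Ups s1 s2 (All x p) = (\<forall>a \<in> sdom B. hsat B Ups (s1(x := a)) s2 p)"
| "hsat B Ups s1 s2 (ExR X m p) =
     (\<exists>R \<in> Ups. R \<subseteq> mrels (sdom B) m \<and> hsat B Ups s1 (s2(X := (s2 X)(m := R))) p)"
| "hsat B Ups s1 s2 (AllR X m p) =
     (\<forall>R \<in> Ups. R \<subseteq> mrels (sdom B) m \<longrightarrow> hsat B Ups s1 (s2(X := (s2 X)(m := R))) p)"

definition hmodels :: "('r, 'f, 'b) struct \<Rightarrow> 'b list set set \<Rightarrow> ('r, 'f) sof \<Rightarrow> bool" where
  "hmodels B Ups p \<longleftrightarrow>
     (\<forall>s1 s2. (\<forall>x. s1 x \<in> sdom B) \<longrightarrow>
        (\<forall>X m. m \<ge> 1 \<longrightarrow> s2 X m \<in> Ups \<and> s2 X m \<subseteq> mrels (sdom B) m) \<longrightarrow>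
        hsat B Ups s1 s2 p)"

end

theory Submission
  imports Defs
begin

section \<open>Ultrafilter basics\<close>

lemma uf_UNIV: "is_ultrafilter H \<Longrightarrow> UNIV \<in> H"
  by (simp add: is_ultrafilter_def)
lemma uf_empty: "is_ultrafilter H \<Longrightarrow> {} \<notin> H"
  by (simp add: is_ultrafilter_def)
lemma uf_mono: "is_ultrafilter H \<Longrightarrow> X \<in> H \<Longrightarrow> X \<subseteq> Y \<Longrightarrow> Y \<in> H"
  unfolding is_ultrafilter_def by blast
lemma uf_Int_iff: "is_ultrafilter H \<Longrightarrow> X \<inter> Y \<in> H \<longleftrightarrow> X \<in> H \<and> Y \<in> H"
  unfolding is_ultrafilter_def by blast
lemma uf_not: "is_ultrafilter H \<Longrightarrow> X \<notin> H \<longleftrightarrow> - X \<in> H"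
proof -
  assume u: "is_ultrafilter H"
  have "\<not> (X \<in> H \<and> - X \<in> H)"
  proof
    assume "X \<in> H \<and> - X \<in> H"
    then have "X \<inter> - X \<in> H" using u uf_Int_iff by blast
    then show False using uf_empty[OF u] by simp
  qed
  moreover have "X \<in> H \<or> - X \<in> H" using u unfolding is_ultrafilter_def by blast
  ultimately show ?thesis by blast
qed
lemma uf_Un: "is_ultrafilter H \<Longrightarrow> X \<union> Y \<in> H \<longleftrightarrow> X \<in> H \<or> Y \<in> H"
proof -
  assume u: "is_ultrafilter H"
  have "X \<union> Y \<notin> H \<longleftrightarrow> X \<notin> H \<and> Y \<notin> H"
    using uf_not[OF u, of "X \<union> Y"] uf_not[OF u, of X] uf_not[OF u, of Y] uf_Int_iff[OF u, of "-X" "-Y"]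
    by (simp add: Compl_Un)
  then show ?thesis by blast
qed
lemma uf_nonempty: "is_ultrafilter H \<Longrightarrow> X \<in> H \<Longrightarrow> \<exists>k. k \<in> X"
proof -
  assume u: "is_ultrafilter H" and X: "X \<in> H"
  show ?thesis
  proof (rule ccontr)
    assume "\<not> (\<exists>k. k \<in> X)"
    then have "X = {}" by blast
    then show False using X uf_empty[OF u] by simp
  qed
qed
lemma uf_cong: "is_ultrafilter H \<Longrightarrow> S \<in> H \<Longrightarrow> (\<And>k. k \<in> S \<Longrightarrow> P k \<longleftrightarrow> Q k) \<Longrightarrow>
   {k. P k} \<in> H \<longleftrightarrow> {k. Q k} \<in> H"
proof -
  assume u: "is_ultrafilter H" and S: "S \<in> H" and e: "\<And>k. k \<in> S \<Longrightarrow> P k \<longleftrightarrow> Q k"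
  have "S \<inter> {k. P k} = S \<inter> {k. Q k}" using e by blast
  moreover have "{k. P k} \<in> H \<longleftrightarrow> S \<inter> {k. P k} \<in> H" using uf_Int_iff[OF u, of S "{k. P k}"] S by blast
  moreover have "{k. Q k} \<in> H \<longleftrightarrow> S \<inter> {k. Q k} \<in> H" using uf_Int_iff[OF u, of S "{k. Q k}"] S by blast
  ultimately show ?thesis by simp
qed
lemma uf_list_Int: "is_ultrafilter H \<Longrightarrow> (\<And>t. t \<in> set ts \<Longrightarrow> {k. P t k} \<in> H) \<Longrightarrow>
   {k. \<forall>t \<in> set ts. P t k} \<in> H"
proof (induction ts)
  case Nil then show ?case by (simp add: uf_UNIV)
next
  case (Cons a ts)
  have "{k. \<forall>t \<in> set (a # ts). P t k} = {k. P a k} \<inter> {k. \<forall>t \<in> set ts. P t k}" by auto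
  then show ?case using Cons uf_Int_iff[OF Cons.prems(1)] by simp
qed
lemma uf_nat_Int: "is_ultrafilter H \<Longrightarrow> (\<And>l. l < (n::nat) \<Longrightarrow> {k. P l k} \<in> H) \<Longrightarrow>
   {k. \<forall>l < n. P l k} \<in> H"
proof -
  assume u: "is_ultrafilter H" and a: "\<And>l. l < (n::nat) \<Longrightarrow> {k. P l k} \<in> H"
  have "{k. \<forall>t \<in> set [0..<n]. P t k} \<in> H" by (rule uf_list_Int[OF u]) (simp add: a)
  moreover have "{k. \<forall>t \<in> set [0..<n]. P t k} = {k. \<forall>l < n. P l k}" by auto
  ultimately show ?thesis by simp
qed

section \<open>Ultraproduct basics\<close>

lemma ucls_eq:
  assumes u: "is_ultrafilter H" and f: "\<And>k. f k \<in> sdom (Bs k)" and g: "\<And>k. g k \<in> sdom (Bs k)"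
  shows "ucls H Bs f = ucls H Bs g \<longleftrightarrow> {k. f k = g k} \<in> H"
proof
  assume "ucls H Bs f = ucls H Bs g"
  moreover have "g \<in> ucls H Bs g" using g uf_UNIV[OF u] by (simp add: ucls_def)
  ultimately have "g \<in> ucls H Bs f" by simp
  then show "{k. f k = g k} \<in> H" by (simp add: ucls_def)
next
  assume fg: "{k. f k = g k} \<in> H"
  show "ucls H Bs f = ucls H Bs g"
  proof (rule set_eqI)
    fix h
    have "{k. f k = h k} \<in> H \<longleftrightarrow> {k. g k = h k} \<in> H"
      by (rule uf_cong[OF u fg]) simp
    then show "h \<in> ucls H Bs f \<longleftrightarrow> h \<in> ucls H Bs g" by (simp add: ucls_def)
  qed
qed

lemma rep_exists:
  assumes u: "is_ultrafilter H" and f: "\<And>k. f k \<in> sdom (Bs k)"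
  shows "is_rep H Bs (SOME g. is_rep H Bs g (ucls H Bs f)) (ucls H Bs f)"
  by (rule someI[of _ f]) (simp add: is_rep_def f)

lemma rep_dom: "x \<in> sdom (uprod H Bs) \<Longrightarrow> \<exists>g. is_rep H Bs g x"
  by (auto simp: uprod_def is_rep_def)

lemma ucls_dom: "(\<And>k. f k \<in> sdom (Bs k)) \<Longrightarrow> ucls H Bs f \<in> sdom (uprod H Bs)"
  by (auto simp: uprod_def)

lemma reps_agree:
  assumes u: "is_ultrafilter H" and a: "reps H Bs fs xs" and b: "reps H Bs gs xs"
  shows "{k. map (\<lambda>g. g k) fs = map (\<lambda>g. g k) gs} \<in> H"
proof -
  have len: "length fs = length gs" using a b by (simp add: reps_def)
  have "\<And>l. l < length fs \<Longrightarrow> {k. (fs ! l) k = (gs ! l) k} \<in> H"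
  proof -
    fix l assume l: "l < length fs"
    then have "is_rep H Bs (fs ! l) (xs ! l)" "is_rep H Bs (gs ! l) (xs ! l)"
      using a b len by (auto simp: reps_def)
    then show "{k. (fs ! l) k = (gs ! l) k} \<in> H"
      using ucls_eq[OF u, of "fs ! l" Bs "gs ! l"] by (simp add: is_rep_def)
  qed
  then have "{k. \<forall>l < length fs. (fs ! l) k = (gs ! l) k} \<in> H"
    by (rule uf_nat_Int[OF u])
  then show ?thesis
    by (rule uf_mono[OF u]) (auto simp: len intro: nth_equalityI)
qed

lemma reps_map: "(\<And>f k. f \<in> set fs \<Longrightarrow> f k \<in> sdom (Bs k)) \<Longrightarrow> reps H Bs fs (map (ucls H Bs) fs)"
  by (simp add: reps_def is_rep_def)

lemma reps_iff:
  assumes u: "is_ultrafilter H" and fs: "\<And>f k. f \<in> set fs \<Longrightarrow> f k \<in> sdom (Bs k)"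
  shows "(\<exists>gs. reps H Bs gs (map (ucls H Bs) fs) \<and> {k. P k (map (\<lambda>g. g k) gs)} \<in> H)
     \<longleftrightarrow> {k. P k (map (\<lambda>g. g k) fs)} \<in> H"
proof
  assume "\<exists>gs. reps H Bs gs (map (ucls H Bs) fs) \<and> {k. P k (map (\<lambda>g. g k) gs)} \<in> H"
  then obtain gs where g: "reps H Bs gs (map (ucls H Bs) fs)" "{k. P k (map (\<lambda>g. g k) gs)} \<in> H" by blast
  have "{k. map (\<lambda>g. g k) gs = map (\<lambda>g. g k) fs} \<in> H"
    by (rule reps_agree[OF u g(1)], rule reps_map, rule fs)
  then have "{k. P k (map (\<lambda>g. g k) gs)} \<in> H \<longleftrightarrow> {k. P k (map (\<lambda>g. g k) fs)} \<in> H"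
    by (rule uf_cong[OF u]) simp
  then show "{k. P k (map (\<lambda>g. g k) fs)} \<in> H" using g(2) by blast
next
  assume "{k. P k (map (\<lambda>g. g k) fs)} \<in> H"
  then show "\<exists>gs. reps H Bs gs (map (ucls H Bs) fs) \<and> {k. P k (map (\<lambda>g. g k) gs)} \<in> H"
  proof -
    assume a: "{k. P k (map (\<lambda>g. g k) fs)} \<in> H"
    have "reps H Bs fs (map (ucls H Bs) fs)" by (rule reps_map) (rule fs)
    then show ?thesis using a by blast
  qed
qed

lemma urel_mrels:
  assumes u: "is_ultrafilter H" and R: "\<And>k. Rk k \<subseteq> mrels (sdom (Bs k)) m"
  shows "urel H Bs Rk \<subseteq> mrels (sdom (uprod H Bs)) m"
proof
  fix xs assume "xs \<in> urel H Bs Rk"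
  then obtain fs where fs: "reps H Bs fs xs" "{k. map (\<lambda>g. g k) fs \<in> Rk k} \<in> H"
    by (auto simp: urel_def)
  obtain k where "map (\<lambda>g. g k) fs \<in> Rk k" using uf_nonempty[OF u fs(2)] by blast
  then have "length fs = m" using R[of k] by (fastforce simp: mrels_def)
  moreover have "set xs \<subseteq> sdom (uprod H Bs)"
  proof
    fix x assume "x \<in> set xs"
    then obtain l where "l < length xs" "x = xs ! l" by (auto simp: in_set_conv_nth)
    then have "is_rep H Bs (fs ! l) x" using fs(1) by (auto simp: reps_def)
    then show "x \<in> sdom (uprod H Bs)" by (auto simp: is_rep_def intro: ucls_dom)
  qed
  ultimately show "xs \<in> mrels (sdom (uprod H Bs)) m" using fs(1) by (simp add: mrels_def reps_def)
qed

lemma urel_empty: "is_ultrafilter H \<Longrightarrow> urel H Bs (\<lambda>k. {}) = {}"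
  by (simp add: urel_def uf_empty)

lemma sfn_dom: "is_structure far B \<Longrightarrow> length xs = far f \<Longrightarrow> set xs \<subseteq> sdom B \<Longrightarrow> sfn B f xs \<in> sdom B"
  unfolding is_structure_def by blast

lemma tval_los:
  fixes H :: "'k set set" and Bs :: "'k \<Rightarrow> ('r,'f,'a) struct"
  assumes u: "is_ultrafilter H" and st: "\<And>k. is_structure far (Bs k)"
    and s: "\<And>x k. s1' x k \<in> sdom (Bs k)"
  shows "wf_trm far t \<Longrightarrow> (\<forall>k. tval (Bs k) (\<lambda>x. s1' x k) t \<in> sdom (Bs k)) \<and>
    tval (uprod H Bs) (\<lambda>x. ucls H Bs (s1' x)) t = ucls H Bs (\<lambda>k. tval (Bs k) (\<lambda>x. s1' x k) t)"
proof (induction t)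
  case (Var x)
  then show ?case using s by simp
next
  case (Fn f ts)
  define h where "h t = (\<lambda>k. tval (Bs k) (\<lambda>x. s1' x k) t)" for t
  have len: "length ts = far f" and wts: "\<And>t. t \<in> set ts \<Longrightarrow> wf_trm far t" using Fn.prems by auto
  have hd: "\<And>t k. t \<in> set ts \<Longrightarrow> h t k \<in> sdom (Bs k)" using Fn.IH wts unfolding h_def by blast
  have he: "\<And>t. t \<in> set ts \<Longrightarrow> tval (uprod H Bs) (\<lambda>x. ucls H Bs (s1' x)) t = ucls H Bs (h t)"
    using Fn.IH wts unfolding h_def by blast
  have dom1: "\<forall>k. tval (Bs k) (\<lambda>x. s1' x k) (Fn f ts) \<in> sdom (Bs k)"
  proof
    fix k
    have "sfn (Bs k) f (map (\<lambda>t. h t k) ts) \<in> sdom (Bs k)"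
      by (rule sfn_dom[OF st]) (use len hd in auto)
    then show "tval (Bs k) (\<lambda>x. s1' x k) (Fn f ts) \<in> sdom (Bs k)" by (simp add: h_def o_def)
  qed
  define g where "g t = (SOME g. is_rep H Bs g (ucls H Bs (h t)))" for t
  have gr: "\<And>t. t \<in> set ts \<Longrightarrow> is_rep H Bs (g t) (ucls H Bs (h t))"
    unfolding g_def by (rule rep_exists[OF u]) (rule hd)
  have gd: "\<And>t k. t \<in> set ts \<Longrightarrow> g t k \<in> sdom (Bs k)" using gr by (simp add: is_rep_def)
  have ge: "\<And>t. t \<in> set ts \<Longrightarrow> {k. g t k = h t k} \<in> H"
  proof -
    fix t assume t: "t \<in> set ts"
    have "ucls H Bs (g t) = ucls H Bs (h t)" using gr[OF t] by (simp add: is_rep_def)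
    then show "{k. g t k = h t k} \<in> H" using ucls_eq[OF u, of "g t" Bs "h t"] gd[OF t] hd[OF t] by blast
  qed
  have "tval (uprod H Bs) (\<lambda>x. ucls H Bs (s1' x)) (Fn f ts)
      = sfn (uprod H Bs) f (map (\<lambda>t. ucls H Bs (h t)) ts)"
    by (simp only: tval.simps map_cong[OF refl he])
  also have "\<dots> = ucls H Bs (\<lambda>k. sfn (Bs k) f (map (\<lambda>t. g t k) ts))"
    by (simp add: uprod_def g_def o_def)
  also have "\<dots> = ucls H Bs (\<lambda>k. sfn (Bs k) f (map (\<lambda>t. h t k) ts))"
  proof (rule ucls_eq[OF u, THEN iffD2])
    show "\<And>k. sfn (Bs k) f (map (\<lambda>t. g t k) ts) \<in> sdom (Bs k)"
      by (rule sfn_dom[OF st]) (use len gd in auto)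
    show "\<And>k. sfn (Bs k) f (map (\<lambda>t. h t k) ts) \<in> sdom (Bs k)"
      by (rule sfn_dom[OF st]) (use len hd in auto)
    have "{k. \<forall>t \<in> set ts. g t k = h t k} \<in> H" by (rule uf_list_Int[OF u]) (rule ge)
    then show "{k. sfn (Bs k) f (map (\<lambda>t. g t k) ts) = sfn (Bs k) f (map (\<lambda>t. h t k) ts)} \<in> H"
    proof (rule uf_mono[OF u], safe)
      fix k assume a: "\<forall>t \<in> set ts. g t k = h t k"
      have "map (\<lambda>t. g t k) ts = map (\<lambda>t. h t k) ts" by (rule map_cong[OF refl]) (use a in blast)
      then show "sfn (Bs k) f (map (\<lambda>t. g t k) ts) = sfn (Bs k) f (map (\<lambda>t. h t k) ts)"
        by (rule arg_cong[where f="sfn (Bs k) f"])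
    qed
  qed
  also have "\<dots> = ucls H Bs (\<lambda>k. tval (Bs k) (\<lambda>x. s1' x k) (Fn f ts))"
    by (simp add: h_def o_def)
  finally show ?case using dom1 by blast
qed

lemma henkin_decomp:
  assumes u: "is_ultrafilter H" and R: "R \<in> henkin_rels H Bs" and Rm: "R \<subseteq> mrels (sdom (uprod H Bs)) m"
  shows "\<exists>Rk. (\<forall>k. Rk k \<subseteq> mrels (sdom (Bs k)) m) \<and> R = urel H Bs Rk"
proof -
  obtain m' Rk where m': "R \<subseteq> mrels (sdom (uprod H Bs)) m'" "\<forall>k. Rk k \<subseteq> mrels (sdom (Bs k)) m'"
    "R = urel H Bs Rk"
    using R by (auto simp: henkin_rels_def decomposable_def)
  show ?thesis
  proof (cases "m' = m")
    case True then show ?thesis using m' by blast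
  next
    case False
    then have "R = {}" using m' Rm by (auto simp: mrels_def)
    then show ?thesis using urel_empty[OF u, of Bs] by (intro exI[of _ "\<lambda>k. {}"]) auto
  qed
qed

lemma henkin_intro:
  assumes u: "is_ultrafilter H" and m: "m \<ge> 1" and R: "\<And>k. Rk k \<subseteq> mrels (sdom (Bs k)) m"
  shows "urel H Bs Rk \<in> henkin_rels H Bs" "urel H Bs Rk \<subseteq> mrels (sdom (uprod H Bs)) m"
proof -
  have a: "urel H Bs Rk \<subseteq> mrels (sdom (uprod H Bs)) m" by (rule urel_mrels[OF u]) (rule R)
  then show "urel H Bs Rk \<subseteq> mrels (sdom (uprod H Bs)) m" .
  show "urel H Bs Rk \<in> henkin_rels H Bs"
    unfolding henkin_rels_def decomposable_def using a m R by blast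
qed

lemma choice_good:
  assumes "\<And>k. \<exists>b. D k b"
  shows "\<exists>g. \<forall>k. D k (g k) \<and> ((\<exists>b. D k b \<and> P k b) \<longrightarrow> P k (g k))"
proof -
  have "\<forall>k. \<exists>b. D k b \<and> ((\<exists>b. D k b \<and> P k b) \<longrightarrow> P k b)" using assms by blast
  then show ?thesis by (rule choice)
qed

lemma upd1: "(\<lambda>y. (s1'(x := g)) y k) = (\<lambda>y. s1' y k)(x := g k)"
  by auto
lemma upd1': "(\<lambda>y. ucls H Bs (s1' y))(x := ucls H Bs g) = (\<lambda>y. ucls H Bs ((s1'(x := g)) y))"
  by (auto simp: fun_eq_iff)
lemma upd2: "(\<lambda>X' m'. (Rk(X := (Rk X)(m := R0))) X' m' k) = (\<lambda>X m. Rk X m k)(X := ((\<lambda>X m. Rk X m k) X)(m := R0 k))"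
  by (simp add: fun_eq_iff)

lemma upd_urel: "s2 X' m' = U (Rk X' m') \<Longrightarrow>
  (s2(X := (s2 X)(m := U R0))) X' m' = U ((Rk(X := (Rk X)(m := R0))) X' m')"
  by (cases "X' = X"; cases "m' = m"; simp)

lemma los:
  fixes H :: "'k set set" and Bs :: "'k \<Rightarrow> ('r,'f,'a) struct"
  assumes u: "is_ultrafilter H" and st: "\<And>k. is_structure far (Bs k)"
  shows "wf_so rar far p \<Longrightarrow> (\<And>x k. s1' x k \<in> sdom (Bs k)) \<Longrightarrow>
    (\<And>X m. m \<ge> 1 \<Longrightarrow> s2 X m = urel H Bs (Rk X m)) \<Longrightarrow>
    hsat (uprod H Bs) (henkin_rels H Bs) (\<lambda>x. ucls H Bs (s1' x)) s2 p \<longleftrightarrow>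
    {k. hsat (Bs k) UNIV (\<lambda>x. s1' x k) (\<lambda>X m. Rk X m k) p} \<in> H"
proof (induction p arbitrary: s1' s2 Rk)
  case (Eq t v)
  have t: "wf_trm far t" and v: "wf_trm far v" using Eq.prems by auto
  note a = tval_los[where H=H and Bs=Bs and s1'=s1', OF u st Eq.prems(2) t]
    and b = tval_los[where H=H and Bs=Bs and s1'=s1', OF u st Eq.prems(2) v]
  show ?case using a b ucls_eq[OF u, of "\<lambda>k. tval (Bs k) (\<lambda>x. s1' x k) t" Bs "\<lambda>k. tval (Bs k) (\<lambda>x. s1' x k) v"] by simp
next
  case (Rel r ts)
  have w: "\<And>t. t \<in> set ts \<Longrightarrow> wf_trm far t" using Rel.prems by auto
  define h where "h t = (\<lambda>k. tval (Bs k) (\<lambda>x. s1' x k) t)" for t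
  have e: "map (tval (uprod H Bs) (\<lambda>x. ucls H Bs (s1' x))) ts = map (ucls H Bs) (map h ts)"
    using tval_los[where H=H and Bs=Bs and s1'=s1', OF u st Rel.prems(2) w] by (simp add: h_def)
  have d: "\<And>f k. f \<in> set (map h ts) \<Longrightarrow> f k \<in> sdom (Bs k)"
    using tval_los[where H=H and Bs=Bs and s1'=s1', OF u st Rel.prems(2) w] by (auto simp: h_def)
  have "hsat (uprod H Bs) (henkin_rels H Bs) (\<lambda>x. ucls H Bs (s1' x)) s2 (Rel r ts) \<longleftrightarrow>
     (\<exists>gs. reps H Bs gs (map (ucls H Bs) (map h ts)) \<and> {k. srel (Bs k) r (map (\<lambda>g. g k) gs)} \<in> H)"
    by (simp only: hsat.simps e) (simp add: uprod_def)
  also have "\<dots> \<longleftrightarrow> {k. srel (Bs k) r (map (\<lambda>g. g k) (map h ts))} \<in> H"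
    by (rule reps_iff[where Bs=Bs and fs="map h ts" and P="\<lambda>k xs. srel (Bs k) r xs", OF u]) (use d in blast)
  finally show ?case by (simp add: h_def o_def)
next
  case (RApp X m ts)
  have w: "\<And>t. t \<in> set ts \<Longrightarrow> wf_trm far t" and m: "m \<ge> 1" using RApp.prems by auto
  define h where "h t = (\<lambda>k. tval (Bs k) (\<lambda>x. s1' x k) t)" for t
  have e: "map (tval (uprod H Bs) (\<lambda>x. ucls H Bs (s1' x))) ts = map (ucls H Bs) (map h ts)"
    using tval_los[where H=H and Bs=Bs and s1'=s1', OF u st RApp.prems(2) w] by (simp add: h_def)
  have d: "\<And>f k. f \<in> set (map h ts) \<Longrightarrow> f k \<in> sdom (Bs k)"
    using tval_los[where H=H and Bs=Bs and s1'=s1', OF u st RApp.prems(2) w] by (auto simp: h_def)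
  have "hsat (uprod H Bs) (henkin_rels H Bs) (\<lambda>x. ucls H Bs (s1' x)) s2 (RApp X m ts) \<longleftrightarrow>
     (\<exists>gs. reps H Bs gs (map (ucls H Bs) (map h ts)) \<and> {k. map (\<lambda>g. g k) gs \<in> Rk X m k} \<in> H)"
    by (simp only: hsat.simps e RApp.prems(3)[OF m]) (simp add: urel_def)
  also have "\<dots> \<longleftrightarrow> {k. map (\<lambda>g. g k) (map h ts) \<in> Rk X m k} \<in> H"
    by (rule reps_iff[where Bs=Bs and fs="map h ts" and P="\<lambda>k xs. xs \<in> Rk X m k", OF u]) (use d in blast)
  finally show ?case by (simp add: h_def o_def)
next
  case (Neg p)
  define S where "S = {k. hsat (Bs k) UNIV (\<lambda>x. s1' x k) (\<lambda>X m. Rk X m k) p}"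
  have "{k. hsat (Bs k) UNIV (\<lambda>x. s1' x k) (\<lambda>X m. Rk X m k) (Neg p)} = - S"
    by (auto simp: S_def)
  moreover have "hsat (uprod H Bs) (henkin_rels H Bs) (\<lambda>x. ucls H Bs (s1' x)) s2 p \<longleftrightarrow> S \<in> H"
    using Neg by (simp add: S_def)
  ultimately show ?case using uf_not[OF u, of S] by simp
next
  case (Conj p q)
  have "{k. hsat (Bs k) UNIV (\<lambda>x. s1' x k) (\<lambda>X m. Rk X m k) (Conj p q)} =
     {k. hsat (Bs k) UNIV (\<lambda>x. s1' x k) (\<lambda>X m. Rk X m k) p} \<inter> {k. hsat (Bs k) UNIV (\<lambda>x. s1' x k) (\<lambda>X m. Rk X m k) q}"
    by auto
  then show ?case using Conj uf_Int_iff[OF u] by simp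
next
  case (Disj p q)
  have "{k. hsat (Bs k) UNIV (\<lambda>x. s1' x k) (\<lambda>X m. Rk X m k) (Disj p q)} =
     {k. hsat (Bs k) UNIV (\<lambda>x. s1' x k) (\<lambda>X m. Rk X m k) p} \<union> {k. hsat (Bs k) UNIV (\<lambda>x. s1' x k) (\<lambda>X m. Rk X m k) q}"
    by auto
  then show ?case using Disj uf_Un[OF u] by simp
next
  case (Impl p q)
  define S where "S = {k. hsat (Bs k) UNIV (\<lambda>x. s1' x k) (\<lambda>X m. Rk X m k) p}"
  define T where "T = {k. hsat (Bs k) UNIV (\<lambda>x. s1' x k) (\<lambda>X m. Rk X m k) q}"
  have e: "{k. hsat (Bs k) UNIV (\<lambda>x. s1' x k) (\<lambda>X m. Rk X m k) (Impl p q)} = - S \<union> T"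
    by (auto simp: S_def T_def)
  have ip: "hsat (uprod H Bs) (henkin_rels H Bs) (\<lambda>x. ucls H Bs (s1' x)) s2 p \<longleftrightarrow> S \<in> H"
    using Impl by (simp add: S_def)
  have iq: "hsat (uprod H Bs) (henkin_rels H Bs) (\<lambda>x. ucls H Bs (s1' x)) s2 q \<longleftrightarrow> T \<in> H"
    using Impl by (simp add: T_def)
  have "- S \<union> T \<in> H \<longleftrightarrow> (S \<notin> H \<or> T \<in> H)"
    using uf_Un[OF u, of "- S" T] uf_not[OF u, of S] by blast
  then show ?case using e ip iq by simp
next
  case (Ex x p)
  have w: "wf_so rar far p" using Ex.prems by simp
  define P where "P k b = hsat (Bs k) UNIV ((\<lambda>y. s1' y k)(x := b)) (\<lambda>X m. Rk X m k) p" for k b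
  have IH: "hsat (uprod H Bs) (henkin_rels H Bs) ((\<lambda>y. ucls H Bs (s1' y))(x := ucls H Bs g)) s2 p
      \<longleftrightarrow> {k. P k (g k)} \<in> H" if g: "\<And>k. g k \<in> sdom (Bs k)" for g
  proof -
    have d: "\<And>y k. (s1'(x := g)) y k \<in> sdom (Bs k)" using Ex.prems(2) g by simp
    show ?thesis using Ex.IH[OF w d Ex.prems(3)] by (simp only: upd1' upd1 P_def)
  qed
  have "hsat (uprod H Bs) (henkin_rels H Bs) (\<lambda>y. ucls H Bs (s1' y)) s2 (Ex x p) \<longleftrightarrow>
     (\<exists>a \<in> sdom (uprod H Bs). hsat (uprod H Bs) (henkin_rels H Bs) ((\<lambda>y. ucls H Bs (s1' y))(x := a)) s2 p)"
    by simp
  also have "\<dots> \<longleftrightarrow> (\<exists>g. (\<forall>k. g k \<in> sdom (Bs k)) \<and> {k. P k (g k)} \<in> H)"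
  proof
    assume "\<exists>a \<in> sdom (uprod H Bs). hsat (uprod H Bs) (henkin_rels H Bs) ((\<lambda>y. ucls H Bs (s1' y))(x := a)) s2 p"
    then obtain a where a: "a \<in> sdom (uprod H Bs)"
      "hsat (uprod H Bs) (henkin_rels H Bs) ((\<lambda>y. ucls H Bs (s1' y))(x := a)) s2 p" by blast
    then obtain g where g: "\<forall>k. g k \<in> sdom (Bs k)" "a = ucls H Bs g" by (auto simp: uprod_def)
    then show "\<exists>g. (\<forall>k. g k \<in> sdom (Bs k)) \<and> {k. P k (g k)} \<in> H" using IH[of g] a(2) by auto
  next
    assume "\<exists>g. (\<forall>k. g k \<in> sdom (Bs k)) \<and> {k. P k (g k)} \<in> H"
    then obtain g where g: "\<forall>k. g k \<in> sdom (Bs k)" "{k. P k (g k)} \<in> H" by blast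
    have "ucls H Bs g \<in> sdom (uprod H Bs)" by (rule ucls_dom) (use g in blast)
    then show "\<exists>a \<in> sdom (uprod H Bs). hsat (uprod H Bs) (henkin_rels H Bs) ((\<lambda>y. ucls H Bs (s1' y))(x := a)) s2 p"
      using IH[of g] g by auto
  qed
  also have "\<dots> \<longleftrightarrow> {k. \<exists>b \<in> sdom (Bs k). P k b} \<in> H"
  proof
    assume "\<exists>g. (\<forall>k. g k \<in> sdom (Bs k)) \<and> {k. P k (g k)} \<in> H"
    then obtain g where g: "\<forall>k. g k \<in> sdom (Bs k)" "{k. P k (g k)} \<in> H" by blast
    show "{k. \<exists>b \<in> sdom (Bs k). P k b} \<in> H" by (rule uf_mono[OF u g(2)]) (use g(1) in blast)
  next
    assume a: "{k. \<exists>b \<in> sdom (Bs k). P k b} \<in> H"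
    have "\<And>k. \<exists>b. b \<in> sdom (Bs k)" using st unfolding is_structure_def by blast
    then obtain g where g: "\<And>k. g k \<in> sdom (Bs k) \<and> ((\<exists>b. b \<in> sdom (Bs k) \<and> P k b) \<longrightarrow> P k (g k))"
      using choice_good[where D="\<lambda>k b. b \<in> sdom (Bs k)" and P=P] by blast
    have "{k. P k (g k)} \<in> H" by (rule uf_mono[OF u a]) (use g in blast)
    then show "\<exists>g. (\<forall>k. g k \<in> sdom (Bs k)) \<and> {k. P k (g k)} \<in> H" using g by blast
  qed
  finally show ?case by (simp add: P_def)
next
  case (All x p)
  have w: "wf_so rar far p" using All.prems by simp
  define P where "P k b = hsat (Bs k) UNIV ((\<lambda>y. s1' y k)(x := b)) (\<lambda>X m. Rk X m k) p" for k b
  have IH: "hsat (uprod H Bs) (henkin_rels H Bs) ((\<lambda>y. ucls H Bs (s1' y))(x := ucls H Bs g)) s2 p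
      \<longleftrightarrow> {k. P k (g k)} \<in> H" if g: "\<And>k. g k \<in> sdom (Bs k)" for g
  proof -
    have d: "\<And>y k. (s1'(x := g)) y k \<in> sdom (Bs k)" using All.prems(2) g by simp
    show ?thesis using All.IH[OF w d All.prems(3)] by (simp only: upd1' upd1 P_def)
  qed
  have "hsat (uprod H Bs) (henkin_rels H Bs) (\<lambda>y. ucls H Bs (s1' y)) s2 (All x p) \<longleftrightarrow>
     (\<forall>a \<in> sdom (uprod H Bs). hsat (uprod H Bs) (henkin_rels H Bs) ((\<lambda>y. ucls H Bs (s1' y))(x := a)) s2 p)"
    by simp
  also have "\<dots> \<longleftrightarrow> (\<forall>g. (\<forall>k. g k \<in> sdom (Bs k)) \<longrightarrow> {k. P k (g k)} \<in> H)"
  proof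
    assume a: "\<forall>a \<in> sdom (uprod H Bs). hsat (uprod H Bs) (henkin_rels H Bs) ((\<lambda>y. ucls H Bs (s1' y))(x := a)) s2 p"
    show "\<forall>g. (\<forall>k. g k \<in> sdom (Bs k)) \<longrightarrow> {k. P k (g k)} \<in> H"
    proof (intro allI impI)
      fix g assume g: "\<forall>k. g k \<in> sdom (Bs k)"
      have "ucls H Bs g \<in> sdom (uprod H Bs)" by (rule ucls_dom) (use g in blast)
      then show "{k. P k (g k)} \<in> H" using IH[of g] g a by auto
    qed
  next
    assume a: "\<forall>g. (\<forall>k. g k \<in> sdom (Bs k)) \<longrightarrow> {k. P k (g k)} \<in> H"
    show "\<forall>a \<in> sdom (uprod H Bs). hsat (uprod H Bs) (henkin_rels H Bs) ((\<lambda>y. ucls H Bs (s1' y))(x := a)) s2 p"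
    proof
      fix b assume "b \<in> sdom (uprod H Bs)"
      then obtain g where g: "\<forall>k. g k \<in> sdom (Bs k)" "b = ucls H Bs g" by (auto simp: uprod_def)
      then show "hsat (uprod H Bs) (henkin_rels H Bs) ((\<lambda>y. ucls H Bs (s1' y))(x := b)) s2 p"
        using IH[of g] a by auto
    qed
  qed
  also have "\<dots> \<longleftrightarrow> {k. \<forall>b \<in> sdom (Bs k). P k b} \<in> H"
  proof
    assume a: "{k. \<forall>b \<in> sdom (Bs k). P k b} \<in> H"
    show "\<forall>g. (\<forall>k. g k \<in> sdom (Bs k)) \<longrightarrow> {k. P k (g k)} \<in> H"
    proof (intro allI impI)
      fix g assume g: "\<forall>k. g k \<in> sdom (Bs k)"
      show "{k. P k (g k)} \<in> H" by (rule uf_mono[OF u a]) (use g in blast)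
    qed
  next
    assume a: "\<forall>g. (\<forall>k. g k \<in> sdom (Bs k)) \<longrightarrow> {k. P k (g k)} \<in> H"
    show "{k. \<forall>b \<in> sdom (Bs k). P k b} \<in> H"
    proof (rule ccontr)
      assume n: "{k. \<forall>b \<in> sdom (Bs k). P k b} \<notin> H"
      then have c: "- {k. \<forall>b \<in> sdom (Bs k). P k b} \<in> H" using uf_not[OF u] by blast
      have "\<And>k. \<exists>b. b \<in> sdom (Bs k)" using st unfolding is_structure_def by blast
      then obtain g where g: "\<And>k. g k \<in> sdom (Bs k) \<and> ((\<exists>b. b \<in> sdom (Bs k) \<and> \<not> P k b) \<longrightarrow> \<not> P k (g k))"
        using choice_good[where D="\<lambda>k b. b \<in> sdom (Bs k)" and P="\<lambda>k b. \<not> P k b"] by blast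
      have c2: "{k. \<not> P k (g k)} \<in> H" by (rule uf_mono[OF u c]) (use g in blast)
      have "{k. P k (g k)} \<in> H" using a g by blast
      then have "{k. P k (g k)} \<inter> {k. \<not> P k (g k)} \<in> H" using c2 uf_Int_iff[OF u] by blast
      moreover have "{k. P k (g k)} \<inter> {k. \<not> P k (g k)} = {}" by blast
      ultimately show False using uf_empty[OF u] by simp
    qed
  qed
  finally show ?case by (simp add: P_def)
next
  case (ExR X m p)
  have w: "wf_so rar far p" and m: "m \<ge> 1" using ExR.prems(1) by auto
  define Q where "Q k R = hsat (Bs k) UNIV (\<lambda>y. s1' y k) ((\<lambda>X m. Rk X m k)(X := ((\<lambda>X m. Rk X m k) X)(m := R))) p" for k R
  have IH: "hsat (uprod H Bs) (henkin_rels H Bs) (\<lambda>y. ucls H Bs (s1' y)) (s2(X := (s2 X)(m := urel H Bs R0))) p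
      \<longleftrightarrow> {k. Q k (R0 k)} \<in> H" for R0
  proof -
    have e: "(s2(X := (s2 X)(m := urel H Bs R0))) X' m' = urel H Bs ((Rk(X := (Rk X)(m := R0))) X' m')"
      if m': "1 \<le> m'" for X' m'
      by (rule upd_urel[where U="urel H Bs"]) (rule ExR.prems(3)[OF m'])
    show ?thesis using ExR.IH[OF w ExR.prems(2) e] by (simp only: upd2 Q_def)
  qed
  have "hsat (uprod H Bs) (henkin_rels H Bs) (\<lambda>y. ucls H Bs (s1' y)) s2 (ExR X m p) \<longleftrightarrow>
     (\<exists>R \<in> henkin_rels H Bs. R \<subseteq> mrels (sdom (uprod H Bs)) m \<and>
        hsat (uprod H Bs) (henkin_rels H Bs) (\<lambda>y. ucls H Bs (s1' y)) (s2(X := (s2 X)(m := R))) p)"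
    by simp
  also have "\<dots> \<longleftrightarrow> (\<exists>R0. (\<forall>k. R0 k \<subseteq> mrels (sdom (Bs k)) m) \<and> {k. Q k (R0 k)} \<in> H)"
  proof
    assume "\<exists>R \<in> henkin_rels H Bs. R \<subseteq> mrels (sdom (uprod H Bs)) m \<and>
        hsat (uprod H Bs) (henkin_rels H Bs) (\<lambda>y. ucls H Bs (s1' y)) (s2(X := (s2 X)(m := R))) p"
    then obtain R where R: "R \<in> henkin_rels H Bs" "R \<subseteq> mrels (sdom (uprod H Bs)) m"
       "hsat (uprod H Bs) (henkin_rels H Bs) (\<lambda>y. ucls H Bs (s1' y)) (s2(X := (s2 X)(m := R))) p" by blast
    obtain R0 where R0: "\<forall>k. R0 k \<subseteq> mrels (sdom (Bs k)) m" "R = urel H Bs R0"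
      using henkin_decomp[OF u R(1,2)] by blast
    show "\<exists>R0. (\<forall>k. R0 k \<subseteq> mrels (sdom (Bs k)) m) \<and> {k. Q k (R0 k)} \<in> H"
      using IH[of R0] R(3) R0 by auto
  next
    assume "\<exists>R0. (\<forall>k. R0 k \<subseteq> mrels (sdom (Bs k)) m) \<and> {k. Q k (R0 k)} \<in> H"
    then obtain R0 where R0: "\<And>k. R0 k \<subseteq> mrels (sdom (Bs k)) m" "{k. Q k (R0 k)} \<in> H" by blast
    note hi = henkin_intro[OF u m R0(1)]
    show "\<exists>R \<in> henkin_rels H Bs. R \<subseteq> mrels (sdom (uprod H Bs)) m \<and>
        hsat (uprod H Bs) (henkin_rels H Bs) (\<lambda>y. ucls H Bs (s1' y)) (s2(X := (s2 X)(m := R))) p"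
    proof (rule bexI[of _ "urel H Bs R0"])
      show "urel H Bs R0 \<in> henkin_rels H Bs" by (rule hi(1))
      have h: "hsat (uprod H Bs) (henkin_rels H Bs) (\<lambda>y. ucls H Bs (s1' y)) (s2(X := (s2 X)(m := urel H Bs R0))) p"
        by (rule IH[of R0, THEN iffD2, OF R0(2)])
      show "urel H Bs R0 \<subseteq> mrels (sdom (uprod H Bs)) m \<and>
        hsat (uprod H Bs) (henkin_rels H Bs) (\<lambda>y. ucls H Bs (s1' y)) (s2(X := (s2 X)(m := urel H Bs R0))) p"
        using hi(2) h by (rule conjI)
    qed
  qed
  also have "\<dots> \<longleftrightarrow> {k. \<exists>R \<in> UNIV. R \<subseteq> mrels (sdom (Bs k)) m \<and> Q k R} \<in> H"
  proof
    assume "\<exists>R0. (\<forall>k. R0 k \<subseteq> mrels (sdom (Bs k)) m) \<and> {k. Q k (R0 k)} \<in> H"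
    then obtain R0 where R0: "\<forall>k. R0 k \<subseteq> mrels (sdom (Bs k)) m" "{k. Q k (R0 k)} \<in> H" by blast
    show "{k. \<exists>R \<in> UNIV. R \<subseteq> mrels (sdom (Bs k)) m \<and> Q k R} \<in> H"
      by (rule uf_mono[OF u R0(2)]) (use R0(1) in blast)
  next
    assume a: "{k. \<exists>R \<in> UNIV. R \<subseteq> mrels (sdom (Bs k)) m \<and> Q k R} \<in> H"
    have "\<And>k. \<exists>R. R \<subseteq> mrels (sdom (Bs k)) m" by blast
    then obtain R0 where g: "\<And>k. R0 k \<subseteq> mrels (sdom (Bs k)) m \<and> ((\<exists>R. R \<subseteq> mrels (sdom (Bs k)) m \<and> Q k R) \<longrightarrow> Q k (R0 k))"
      using choice_good[where D="\<lambda>k R. R \<subseteq> mrels (sdom (Bs k)) m" and P=Q] by blast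
    have "{k. Q k (R0 k)} \<in> H" by (rule uf_mono[OF u a]) (use g in blast)
    then show "\<exists>R0. (\<forall>k. R0 k \<subseteq> mrels (sdom (Bs k)) m) \<and> {k. Q k (R0 k)} \<in> H" using g by blast
  qed
  finally show ?case by (simp add: Q_def)
next
  case (AllR X m p)
  have w: "wf_so rar far p" and m: "m \<ge> 1" using AllR.prems(1) by auto
  define Q where "Q k R = hsat (Bs k) UNIV (\<lambda>y. s1' y k) ((\<lambda>X m. Rk X m k)(X := ((\<lambda>X m. Rk X m k) X)(m := R))) p" for k R
  have IH: "hsat (uprod H Bs) (henkin_rels H Bs) (\<lambda>y. ucls H Bs (s1' y)) (s2(X := (s2 X)(m := urel H Bs R0))) p
      \<longleftrightarrow> {k. Q k (R0 k)} \<in> H" for R0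
  proof -
    have e: "(s2(X := (s2 X)(m := urel H Bs R0))) X' m' = urel H Bs ((Rk(X := (Rk X)(m := R0))) X' m')"
      if m': "1 \<le> m'" for X' m'
      by (rule upd_urel[where U="urel H Bs"]) (rule AllR.prems(3)[OF m'])
    show ?thesis using AllR.IH[OF w AllR.prems(2) e] by (simp only: upd2 Q_def)
  qed
  have "hsat (uprod H Bs) (henkin_rels H Bs) (\<lambda>y. ucls H Bs (s1' y)) s2 (AllR X m p) \<longleftrightarrow>
     (\<forall>R \<in> henkin_rels H Bs. R \<subseteq> mrels (sdom (uprod H Bs)) m \<longrightarrow>
        hsat (uprod H Bs) (henkin_rels H Bs) (\<lambda>y. ucls H Bs (s1' y)) (s2(X := (s2 X)(m := R))) p)"
    by simp
  also have "\<dots> \<longleftrightarrow> (\<forall>R0. (\<forall>k. R0 k \<subseteq> mrels (sdom (Bs k)) m) \<longrightarrow> {k. Q k (R0 k)} \<in> H)"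
  proof
    assume a: "\<forall>R \<in> henkin_rels H Bs. R \<subseteq> mrels (sdom (uprod H Bs)) m \<longrightarrow>
        hsat (uprod H Bs) (henkin_rels H Bs) (\<lambda>y. ucls H Bs (s1' y)) (s2(X := (s2 X)(m := R))) p"
    show "\<forall>R0. (\<forall>k. R0 k \<subseteq> mrels (sdom (Bs k)) m) \<longrightarrow> {k. Q k (R0 k)} \<in> H"
    proof (intro allI impI)
      fix R0 assume R0: "\<forall>k. R0 k \<subseteq> mrels (sdom (Bs k)) m"
      then have R0': "\<And>k. R0 k \<subseteq> mrels (sdom (Bs k)) m" by blast
      note hi = henkin_intro[OF u m R0']
      have "hsat (uprod H Bs) (henkin_rels H Bs) (\<lambda>y. ucls H Bs (s1' y)) (s2(X := (s2 X)(m := urel H Bs R0))) p"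
        by (rule a[rule_format, OF hi(1) hi(2)])
      then show "{k. Q k (R0 k)} \<in> H" by (rule IH[of R0, THEN iffD1])
    qed
  next
    assume a: "\<forall>R0. (\<forall>k. R0 k \<subseteq> mrels (sdom (Bs k)) m) \<longrightarrow> {k. Q k (R0 k)} \<in> H"
    show "\<forall>R \<in> henkin_rels H Bs. R \<subseteq> mrels (sdom (uprod H Bs)) m \<longrightarrow>
        hsat (uprod H Bs) (henkin_rels H Bs) (\<lambda>y. ucls H Bs (s1' y)) (s2(X := (s2 X)(m := R))) p"
    proof (intro ballI impI)
      fix R assume R: "R \<in> henkin_rels H Bs" "R \<subseteq> mrels (sdom (uprod H Bs)) m"
      obtain R0 where R0: "\<forall>k. R0 k \<subseteq> mrels (sdom (Bs k)) m" "R = urel H Bs R0"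
        using henkin_decomp[OF u R(1,2)] by blast
      show "hsat (uprod H Bs) (henkin_rels H Bs) (\<lambda>y. ucls H Bs (s1' y)) (s2(X := (s2 X)(m := R))) p"
      proof -
        have "{k. Q k (R0 k)} \<in> H" using a R0(1) by blast
        then have "hsat (uprod H Bs) (henkin_rels H Bs) (\<lambda>y. ucls H Bs (s1' y)) (s2(X := (s2 X)(m := urel H Bs R0))) p"
          by (rule IH[of R0, THEN iffD2])
        then show ?thesis using R0(2) by simp
      qed
    qed
  qed
  also have "\<dots> \<longleftrightarrow> {k. \<forall>R \<in> UNIV. R \<subseteq> mrels (sdom (Bs k)) m \<longrightarrow> Q k R} \<in> H"
  proof
    assume a: "{k. \<forall>R \<in> UNIV. R \<subseteq> mrels (sdom (Bs k)) m \<longrightarrow> Q k R} \<in> H"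
    show "\<forall>R0. (\<forall>k. R0 k \<subseteq> mrels (sdom (Bs k)) m) \<longrightarrow> {k. Q k (R0 k)} \<in> H"
    proof (intro allI impI)
      fix R0 assume R0: "\<forall>k. R0 k \<subseteq> mrels (sdom (Bs k)) m"
      show "{k. Q k (R0 k)} \<in> H" by (rule uf_mono[OF u a]) (use R0 in blast)
    qed
  next
    assume a: "\<forall>R0. (\<forall>k. R0 k \<subseteq> mrels (sdom (Bs k)) m) \<longrightarrow> {k. Q k (R0 k)} \<in> H"
    show "{k. \<forall>R \<in> UNIV. R \<subseteq> mrels (sdom (Bs k)) m \<longrightarrow> Q k R} \<in> H"
    proof (rule ccontr)
      assume n: "{k. \<forall>R \<in> UNIV. R \<subseteq> mrels (sdom (Bs k)) m \<longrightarrow> Q k R} \<notin> H"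
      then have c: "- {k. \<forall>R \<in> UNIV. R \<subseteq> mrels (sdom (Bs k)) m \<longrightarrow> Q k R} \<in> H" using uf_not[OF u] by blast
      have "\<And>k. \<exists>R. R \<subseteq> mrels (sdom (Bs k)) m" by blast
      then obtain g where g: "\<And>k. g k \<subseteq> mrels (sdom (Bs k)) m \<and> ((\<exists>R. R \<subseteq> mrels (sdom (Bs k)) m \<and> \<not> Q k R) \<longrightarrow> \<not> Q k (g k))"
        using choice_good[where D="\<lambda>k R. R \<subseteq> mrels (sdom (Bs k)) m" and P="\<lambda>k R. \<not> Q k R"] by blast
      have c2: "{k. \<not> Q k (g k)} \<in> H" by (rule uf_mono[OF u c]) (use g in blast)
      have "{k. Q k (g k)} \<in> H" using a g by blast
      then have "{k. Q k (g k)} \<inter> {k. \<not> Q k (g k)} \<in> H" using c2 uf_Int_iff[OF u] by blast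
      moreover have "{k. Q k (g k)} \<inter> {k. \<not> Q k (g k)} = {}" by blast
      ultimately show False using uf_empty[OF u] by simp
    qed
  qed
  finally show ?case by (simp add: Q_def)
qed

lemma prod_uf_uf:
  fixes F :: "'i set set" and G :: "'j set set"
  assumes uF: "is_ultrafilter F" and uG: "is_ultrafilter G"
  shows "is_ultrafilter (prod_uf F G)"
  unfolding is_ultrafilter_def
proof (intro conjI allI impI)
  show "UNIV \<in> prod_uf F G" using uF uG by (simp add: prod_uf_def uf_UNIV)
  show "{} \<notin> prod_uf F G" using uF uG by (simp add: prod_uf_def uf_empty)
next
  fix X Y assume a: "X \<in> prod_uf F G \<and> X \<subseteq> Y"
  have "{j. {i. (i, j) \<in> X} \<in> F} \<subseteq> {j. {i. (i, j) \<in> Y} \<in> F}"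
  proof safe
    fix j assume "{i. (i, j) \<in> X} \<in> F"
    then show "{i. (i, j) \<in> Y} \<in> F" by (rule uf_mono[OF uF]) (use a in blast)
  qed
  then show "Y \<in> prod_uf F G" using a uf_mono[OF uG] by (auto simp: prod_uf_def)
next
  fix X Y assume a: "X \<in> prod_uf F G \<and> Y \<in> prod_uf F G"
  have "{j. {i. (i, j) \<in> X \<inter> Y} \<in> F} = {j. {i. (i, j) \<in> X} \<in> F} \<inter> {j. {i. (i, j) \<in> Y} \<in> F}"
  proof -
    have "\<And>j. {i. (i, j) \<in> X \<inter> Y} = {i. (i, j) \<in> X} \<inter> {i. (i, j) \<in> Y}" by auto
    then show ?thesis using uf_Int_iff[OF uF] by auto
  qed
  then show "X \<inter> Y \<in> prod_uf F G" using a uf_Int_iff[OF uG] by (simp add: prod_uf_def)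
next
  fix X :: "('i \<times> 'j) set"
  have "{j. {i. (i, j) \<in> - X} \<in> F} = - {j. {i. (i, j) \<in> X} \<in> F}"
  proof -
    have "\<And>j. {i. (i, j) \<in> - X} = - {i. (i, j) \<in> X}" by auto
    then show ?thesis using uf_not[OF uF] by auto
  qed
  moreover have "{j. {i. (i, j) \<in> X} \<in> F} \<in> G \<or> - {j. {i. (i, j) \<in> X} \<in> F} \<in> G"
    using uG unfolding is_ultrafilter_def by blast
  ultimately show "X \<in> prod_uf F G \<or> - X \<in> prod_uf F G" by (simp add: prod_uf_def)
qed

theorem lemma2p16:
  fixes rar :: "'r \<Rightarrow> nat" and far :: "'f \<Rightarrow> nat"
    and F :: "'i set set" and G :: "'j set set"
    and A :: "'i \<Rightarrow> 'j \<Rightarrow> ('r, 'f, 'a) struct"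
    and phi :: "('r, 'f) sof"
  assumes "is_ultrafilter F" and "is_ultrafilter G"
    and "\<And>i j. is_structure far (A i j)"
    and "wf_so rar far phi"
  shows "{j. hmodels (uprod F (\<lambda>i. A i j)) (henkin_rels F (\<lambda>i. A i j)) phi} \<in> G
     \<longleftrightarrow> hmodels (uprod (prod_uf F G) (\<lambda>(i, j). A i j))
                 (henkin_rels (prod_uf F G) (\<lambda>(i, j). A i j)) phi"
proof -
  note uF = assms(1) and uG = assms(2) and stA = assms(3) and w = assms(4)
  define FG where "FG = prod_uf F G"
  define AA :: "'i \<times> 'j \<Rightarrow> ('r, 'f, 'a) struct" where "AA = (\<lambda>(i, j). A i j)"
  have AAij: "\<And>i j. AA (i, j) = A i j" by (simp add: AA_def)
  have uFG: "is_ultrafilter FG" unfolding FG_def by (rule prod_uf_uf[OF uF uG])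
  have stAA: "\<And>k. is_structure far (AA k)" by (auto simp: AA_def stA split: prod.split)
  have allk: "(\<forall>k. P k) \<longleftrightarrow> (\<forall>i j. P (i, j))" for P :: "'i \<times> 'j \<Rightarrow> bool" by auto
  have L: "hsat (uprod FG AA) (henkin_rels FG AA) (\<lambda>x. ucls FG AA (s1' x)) s2 phi \<longleftrightarrow>
      {j. {i. hsat (A i j) UNIV (\<lambda>x. s1' x (i, j)) (\<lambda>X m. Rk X m (i, j)) phi} \<in> F} \<in> G"
    if d: "\<And>x k. s1' x k \<in> sdom (AA k)" and e: "\<And>X m. m \<ge> 1 \<Longrightarrow> s2 X m = urel FG AA (Rk X m)"
    for s1' s2 Rk
  proof -
    have "hsat (uprod FG AA) (henkin_rels FG AA) (\<lambda>x. ucls FG AA (s1' x)) s2 phi \<longleftrightarrow>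
      {k. hsat (AA k) UNIV (\<lambda>x. s1' x k) (\<lambda>X m. Rk X m k) phi} \<in> FG"
      by (rule los[where H=FG and Bs=AA, OF uFG stAA w d e])
    also have "\<dots> \<longleftrightarrow> {j. {i. hsat (A i j) UNIV (\<lambda>x. s1' x (i, j)) (\<lambda>X m. Rk X m (i, j)) phi} \<in> F} \<in> G"
      by (simp add: FG_def prod_uf_def AAij)
    finally show ?thesis .
  qed
  have Lj: "hsat (uprod F (\<lambda>i. A i j)) (henkin_rels F (\<lambda>i. A i j)) (\<lambda>x. ucls F (\<lambda>i. A i j) (s1' x)) s2 phi \<longleftrightarrow>
      {i. hsat (A i j) UNIV (\<lambda>x. s1' x i) (\<lambda>X m. Rk X m i) phi} \<in> F"
    if d: "\<And>x i. s1' x i \<in> sdom (A i j)" and e: "\<And>X m. m \<ge> 1 \<Longrightarrow> s2 X m = urel F (\<lambda>i. A i j) (Rk X m)"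
    for j s1' s2 Rk
    by (rule los[where H=F and Bs="\<lambda>i. A i j", OF uF stA w d e])
  show ?thesis
    unfolding FG_def[symmetric] AA_def[symmetric]
  proof
    assume S: "{j. hmodels (uprod F (\<lambda>i. A i j)) (henkin_rels F (\<lambda>i. A i j)) phi} \<in> G"
    show "hmodels (uprod FG AA) (henkin_rels FG AA) phi"
      unfolding hmodels_def
    proof (intro allI impI)
      fix s1 :: "nat \<Rightarrow> ('i \<times> 'j \<Rightarrow> 'a) set" and s2 :: "nat \<Rightarrow> nat \<Rightarrow> ('i \<times> 'j \<Rightarrow> 'a) set list set"
      assume a1: "\<forall>x. s1 x \<in> sdom (uprod FG AA)"
        and a2: "\<forall>X m. 1 \<le> m \<longrightarrow> s2 X m \<in> henkin_rels FG AA \<and> s2 X m \<subseteq> mrels (sdom (uprod FG AA)) m"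
      define s1' where "s1' (x::nat) = (SOME g. is_rep FG AA g (s1 x))" for x
      have r1: "is_rep FG AA (s1' x) (s1 x)" for x
        unfolding s1'_def by (rule someI_ex[of "\<lambda>g. is_rep FG AA g (s1 x)"]) (rule rep_dom, use a1 in blast)
      have d1: "\<And>x k. s1' x k \<in> sdom (AA k)" using r1 unfolding is_rep_def by blast
      have s1eq: "s1 = (\<lambda>x. ucls FG AA (s1' x))"
      proof (rule ext)
        fix x show "s1 x = ucls FG AA (s1' x)" using r1[of x] unfolding is_rep_def by blast
      qed
      define Rk where "Rk (X::nat) (m::nat) = (SOME R. (\<forall>k. R k \<subseteq> mrels (sdom (AA k)) m) \<and> s2 X m = urel FG AA R)" for X m
      have r2: "(\<forall>k. Rk X m k \<subseteq> mrels (sdom (AA k)) m) \<and> s2 X m = urel FG AA (Rk X m)" if m: "1 \<le> m" for X m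
        unfolding Rk_def by (rule someI_ex[of "\<lambda>R. (\<forall>k. R k \<subseteq> mrels (sdom (AA k)) m) \<and> s2 X m = urel FG AA R"]) (rule henkin_decomp[OF uFG], use a2 m in blast, use a2 m in blast)
      have "{j. {i. hsat (A i j) UNIV (\<lambda>x. s1' x (i, j)) (\<lambda>X m. Rk X m (i, j)) phi} \<in> F} \<in> G"
      proof (rule uf_mono[OF uG S], safe)
        fix j assume hj: "hmodels (uprod F (\<lambda>i. A i j)) (henkin_rels F (\<lambda>i. A i j)) phi"
        define t1 where "t1 (x::nat) = ucls F (\<lambda>i. A i j) (\<lambda>i. s1' x (i, j))" for x
        define t2 where "t2 (X::nat) (m::nat) = urel F (\<lambda>i. A i j) (\<lambda>i. Rk X m (i, j))" for X m
        have dj: "\<And>x i. s1' x (i, j) \<in> sdom (A i j)" using d1 AAij by metis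
        have "\<forall>x. t1 x \<in> sdom (uprod F (\<lambda>i. A i j))"
          unfolding t1_def by (intro allI ucls_dom) (rule dj)
        moreover have "\<forall>X m. 1 \<le> m \<longrightarrow> t2 X m \<in> henkin_rels F (\<lambda>i. A i j) \<and>
            t2 X m \<subseteq> mrels (sdom (uprod F (\<lambda>i. A i j))) m"
        proof (intro allI impI)
          fix X m assume m: "1 \<le> (m::nat)"
          have "\<And>i. Rk X m (i, j) \<subseteq> mrels (sdom (A i j)) m" using r2[OF m] AAij by metis
          note hi = henkin_intro[where Bs="\<lambda>i. A i j" and Rk="\<lambda>i. Rk X m (i, j)", OF uF m this]
          show "t2 X m \<in> henkin_rels F (\<lambda>i. A i j) \<and> t2 X m \<subseteq> mrels (sdom (uprod F (\<lambda>i. A i j))) m"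
            unfolding t2_def using hi by blast
        qed
        ultimately have "hsat (uprod F (\<lambda>i. A i j)) (henkin_rels F (\<lambda>i. A i j)) t1 t2 phi"
          using hj unfolding hmodels_def by blast
        then show "{i. hsat (A i j) UNIV (\<lambda>x. s1' x (i, j)) (\<lambda>X m. Rk X m (i, j)) phi} \<in> F"
          unfolding t1_def
          using Lj[of "\<lambda>x i. s1' x (i, j)" j t2 "\<lambda>X m i. Rk X m (i, j)", OF dj]
          by (simp add: t2_def)
      qed
      then show "hsat (uprod FG AA) (henkin_rels FG AA) s1 s2 phi"
        unfolding s1eq using L[of s1' s2 Rk, OF d1] r2 by blast
    qed
  next
    assume M: "hmodels (uprod FG AA) (henkin_rels FG AA) phi"
    define adm where "adm j (a :: nat \<Rightarrow> ('i \<Rightarrow> 'a) set) (b :: nat \<Rightarrow> nat \<Rightarrow> ('i \<Rightarrow> 'a) set list set) \<longleftrightarrow> (\<forall>x. a x \<in> sdom (uprod F (\<lambda>i. A i j))) \<and>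
      (\<forall>X m. 1 \<le> m \<longrightarrow> b X m \<in> henkin_rels F (\<lambda>i. A i j) \<and> b X m \<subseteq> mrels (sdom (uprod F (\<lambda>i. A i j))) m)"
      for j a b
    have ex: "\<exists>ab. adm j (fst ab) (snd ab) \<and>
       (\<not> hmodels (uprod F (\<lambda>i. A i j)) (henkin_rels F (\<lambda>i. A i j)) phi \<longrightarrow>
        \<not> hsat (uprod F (\<lambda>i. A i j)) (henkin_rels F (\<lambda>i. A i j)) (fst ab) (snd ab) phi)" for j
    proof (cases "hmodels (uprod F (\<lambda>i. A i j)) (henkin_rels F (\<lambda>i. A i j)) phi")
      case False
      then obtain a b where "adm j a b" "\<not> hsat (uprod F (\<lambda>i. A i j)) (henkin_rels F (\<lambda>i. A i j)) a b phi"
        unfolding hmodels_def adm_def by blast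
      then show ?thesis by (intro exI[of _ "(a, b)"]) simp
    next
      case True
      define g where "g i = (SOME b. b \<in> sdom (A i j))" for i
      have g: "g i \<in> sdom (A i j)" for i
      proof -
        have "sdom (A i j) \<noteq> {}" using stA[of i j] by (simp add: is_structure_def)
        then obtain b where "b \<in> sdom (A i j)" by blast
        then show ?thesis unfolding g_def by (rule someI)
      qed
      have e: "\<And>i. (\<lambda>i. {}) i \<subseteq> mrels (sdom (A i j)) (1::nat)" by simp
      have "adm j (\<lambda>x. ucls F (\<lambda>i. A i j) g) (\<lambda>X m. {})"
        unfolding adm_def
      proof (intro conjI allI impI)
        fix x show "ucls F (\<lambda>i. A i j) g \<in> sdom (uprod F (\<lambda>i. A i j))" by (rule ucls_dom) (rule g)
      next
        fix X and m :: nat assume m: "1 \<le> m"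
        have e: "\<And>i. (\<lambda>i. {}) i \<subseteq> mrels (sdom (A i j)) m" by simp
        show "{} \<in> henkin_rels F (\<lambda>i. A i j)"
          using henkin_intro(1)[where Bs="\<lambda>i. A i j" and Rk="\<lambda>i. {}", OF uF m e] urel_empty[OF uF, of "\<lambda>i. A i j"] by simp
        show "{} \<subseteq> mrels (sdom (uprod F (\<lambda>i. A i j))) m" by simp
      qed
      then show ?thesis using True by (intro exI[of _ "((\<lambda>x. ucls F (\<lambda>i. A i j) g), (\<lambda>X m. {}))"]) simp
    qed
    obtain T where T: "\<And>j. adm j (fst (T j)) (snd (T j)) \<and>
       (\<not> hmodels (uprod F (\<lambda>i. A i j)) (henkin_rels F (\<lambda>i. A i j)) phi \<longrightarrow>
        \<not> hsat (uprod F (\<lambda>i. A i j)) (henkin_rels F (\<lambda>i. A i j)) (fst (T j)) (snd (T j)) phi)"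
    proof -
      have ex': "\<forall>j. \<exists>ab. adm j (fst ab) (snd ab) \<and>
       (\<not> hmodels (uprod F (\<lambda>i. A i j)) (henkin_rels F (\<lambda>i. A i j)) phi \<longrightarrow>
        \<not> hsat (uprod F (\<lambda>i. A i j)) (henkin_rels F (\<lambda>i. A i j)) (fst ab) (snd ab) phi)"
        using ex by blast
      from choice[OF ex'] obtain T where "\<forall>j. adm j (fst (T j)) (snd (T j)) \<and>
       (\<not> hmodels (uprod F (\<lambda>i. A i j)) (henkin_rels F (\<lambda>i. A i j)) phi \<longrightarrow>
        \<not> hsat (uprod F (\<lambda>i. A i j)) (henkin_rels F (\<lambda>i. A i j)) (fst (T j)) (snd (T j)) phi)"
        by blast
      then show ?thesis using that by blast
    qed
    define t1 where "t1 j = fst (T j)" for j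
    define t2 where "t2 j = snd (T j)" for j
    define g1 where "g1 j (x::nat) = (SOME g. is_rep F (\<lambda>i. A i j) g (t1 j x))" for j x
    have g1: "is_rep F (\<lambda>i. A i j) (g1 j x) (t1 j x)" for j x
      unfolding g1_def by (rule someI_ex[of "\<lambda>g. is_rep F (\<lambda>i. A i j) g (t1 j x)"]) (rule rep_dom, use T in \<open>simp add: adm_def t1_def\<close>)
    define R1 where "R1 j (X::nat) (m::nat) = (SOME R. (\<forall>i. R i \<subseteq> mrels (sdom (A i j)) m) \<and> t2 j X m = urel F (\<lambda>i. A i j) R)"
      for j X m
    have R1: "(\<forall>i. R1 j X m i \<subseteq> mrels (sdom (A i j)) m) \<and> t2 j X m = urel F (\<lambda>i. A i j) (R1 j X m)"
      if m: "1 \<le> m" for j X m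
    proof -
      have "t2 j X m \<in> henkin_rels F (\<lambda>i. A i j)" "t2 j X m \<subseteq> mrels (sdom (uprod F (\<lambda>i. A i j))) m"
        using T[of j] m by (simp_all add: adm_def t2_def)
      then show ?thesis unfolding R1_def by (rule someI_ex[OF henkin_decomp[OF uF]])
    qed
    define s1' where "s1' (x::nat) = (\<lambda>(i, j). g1 j x i)" for x
    define Rk where "Rk (X::nat) (m::nat) = (\<lambda>(i, j). R1 j X m i)" for X m
    have s1'ij: "s1' x (i, j) = g1 j x i" for x i j by (simp add: s1'_def)
    have Rkij: "Rk X m (i, j) = R1 j X m i" for X m i j by (simp add: Rk_def)
    have d1: "\<And>x k. s1' x k \<in> sdom (AA k)"
    proof -
      fix x and k :: "'i \<times> 'j"
      obtain i j where k: "k = (i, j)" by (cases k)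
      show "s1' x k \<in> sdom (AA k)" using g1[of j x] by (simp add: k s1'ij AAij is_rep_def)
    qed
    have Rkm: "\<And>k. Rk X m k \<subseteq> mrels (sdom (AA k)) m" if m: "1 \<le> m" for X m
    proof -
      fix k :: "'i \<times> 'j"
      obtain i j where k: "k = (i, j)" by (cases k)
      show "Rk X m k \<subseteq> mrels (sdom (AA k)) m" using R1[OF m, of j X] by (simp add: k Rkij AAij)
    qed
    define s1 where "s1 (x::nat) = ucls FG AA (s1' x)" for x
    define s2 where "s2 (X::nat) (m::nat) = urel FG AA (Rk X m)" for X m
    have "hsat (uprod FG AA) (henkin_rels FG AA) s1 s2 phi"
    proof -
      have "\<forall>x. s1 x \<in> sdom (uprod FG AA)" unfolding s1_def by (intro allI ucls_dom) (rule d1)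
      moreover have "\<forall>X m. 1 \<le> m \<longrightarrow> s2 X m \<in> henkin_rels FG AA \<and> s2 X m \<subseteq> mrels (sdom (uprod FG AA)) m"
      proof (intro allI impI)
        fix X m assume m: "1 \<le> (m::nat)"
        note hi = henkin_intro[where Bs=AA and Rk="Rk X m", OF uFG m Rkm[OF m]]
        show "s2 X m \<in> henkin_rels FG AA \<and> s2 X m \<subseteq> mrels (sdom (uprod FG AA)) m"
          unfolding s2_def using hi by blast
      qed
      ultimately show ?thesis using M unfolding hmodels_def by blast
    qed
    then have "{j. {i. hsat (A i j) UNIV (\<lambda>x. s1' x (i, j)) (\<lambda>X m. Rk X m (i, j)) phi} \<in> F} \<in> G"
      unfolding s1_def[abs_def] using L[of s1' s2 Rk, OF d1] by (simp add: s2_def)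
    then show "{j. hmodels (uprod F (\<lambda>i. A i j)) (henkin_rels F (\<lambda>i. A i j)) phi} \<in> G"
    proof (rule uf_mono[OF uG], safe)
      fix j assume a: "{i. hsat (A i j) UNIV (\<lambda>x. s1' x (i, j)) (\<lambda>X m. Rk X m (i, j)) phi} \<in> F"
      have dj: "\<And>x i. g1 j x i \<in> sdom (A i j)" using g1 by (simp add: is_rep_def)
      have ej: "\<And>X m. 1 \<le> m \<Longrightarrow> t2 j X m = urel F (\<lambda>i. A i j) (R1 j X m)" using R1 by blast
      have "hsat (uprod F (\<lambda>i. A i j)) (henkin_rels F (\<lambda>i. A i j)) (\<lambda>x. ucls F (\<lambda>i. A i j) (g1 j x)) (t2 j) phi"
        using Lj[of "g1 j" j "t2 j" "R1 j", OF dj ej] a by (simp add: s1'ij Rkij)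
      moreover have "(\<lambda>x. ucls F (\<lambda>i. A i j) (g1 j x)) = t1 j" using g1 by (auto simp: is_rep_def)
      ultimately have "hsat (uprod F (\<lambda>i. A i j)) (henkin_rels F (\<lambda>i. A i j)) (t1 j) (t2 j) phi" by simp
      then show "hmodels (uprod F (\<lambda>i. A i j)) (henkin_rels F (\<lambda>i. A i j)) phi"
        using T[of j] by (auto simp: t1_def t2_def)
    qed
  qed
qed

end
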